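(* Let $0<r_1<r_2$, $N\ge 2$, and let $h:[r_1,r_2]\times[0,\infty)\to[0,\infty)$ be continuous with $h(t,0)=0$. Let $q$ and $f$ be defined from $h$ as in the context, and consider, for $\lambda>0$, the boundary value problem $$u''(t)+\lambda q(t)f(t,u(t))=0,\quad t\in(0,1),\qquad u(0)=0=u(1). \qquad (P_\lambda)$$ Assume that $\lim_{u\to0^+}\frac{f(t,u)}{u}=\infty$ uniformly in $t\in(0,1)$. Then for each $R>0$ there exists a constant $\lambda_R>0$ such that for every $\lambda<\lambda_R$ (with $\lambda>0$), problem $(P_\lambda)$ has a positive solution $u$ with $\sup_{t\in[0,1]}u(t)\le R$.
   Context: The problem $(P_\lambda)$ arises from radial solutions of $-\Delta v=\lambda h(|x|,v)$ in the annulus $\{x\in\mathbb{R}^N: r_1<|x|<r_2\}$, $v=0$ on the boundary. The functions $q$ and $f$ are defined as follows. If $N=2$: $q(t)=\left[r_2\left(\frac{r_1}{r_2}\right)^t\log\frac{r_2}{r_1}\right]^2$ and $f(t,u)=h\!\left(r_2\left(\frac{r_1}{r_2}\right)^t,u\right)$. If $N\ge 3$: with $A=\frac{(r_1r_2)^{N-2}}{r_2^{N-2}-r_1^{N-2}}$ and $B=\frac{r_2^{N-2}}{r_2^{N-2}-r_1^{N-2}}$, $q(t)=(N-2)^{-2}\frac{A^{2/(N-2)}}{(B-t)^{2(N-1)/(N-2)}}$ and $f(t,u)=h\!\left(\left(\frac{A}{B-t}\right)^{1/(N-2)},u\right)$. In either case $q$ is continuous on $[0,1]$ and bounded between positive constants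 there. A positive solution of $(P_\lambda)$ is a function $u\in C([0,1])\cap C^2(0,1)$ satisfying $(P_\lambda)$ with $u(t)>0$ for $t\in(0,1)$. *)

theory Defs
  imports "HOL-Analysis.Analysis"
begin

text \<open>The weight q and nonlinearity f of the ODE obtained from radial solutions
  of -Delta v = lambda h(|x|,v) in the annulus r1 < |x| < r2 of R^N.\<close>

definition qfun :: "nat \<Rightarrow> real \<Rightarrow> real \<Rightarrow> real \<Rightarrow> real" where
  "qfun N r1 r2 t =
     (if N = 2 then (r2 * (r1 / r2) powr t * ln (r2 / r1))\<^sup>2
      else (let A = (r1 * r2) ^ (N - 2) / (r2 ^ (N - 2) - r1 ^ (N - 2));
                B = r2 ^ (N - 2) / (r2 ^ (N - 2) - r1 ^ (N - 2))
            in (1 / (real N - 2)\<^sup>2) * A powr (2 / (real N - 2))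
               / (B - t) powr (2 * (real N - 1) / (real N - 2))))"

definition ffun :: "nat \<Rightarrow> real \<Rightarrow> real \<Rightarrow> (real \<Rightarrow> real \<Rightarrow> real) \<Rightarrow> real \<Rightarrow> real \<Rightarrow> real" where
  "ffun N r1 r2 h t u =
     (if N = 2 then h (r2 * (r1 / r2) powr t) u
      else (let A = (r1 * r2) ^ (N - 2) / (r2 ^ (N - 2) - r1 ^ (N - 2));
                B = r2 ^ (N - 2) / (r2 ^ (N - 2) - r1 ^ (N - 2))
            in h ((A / (B - t)) powr (1 / (real N - 2))) u))"

definition positive_solution ::
  "nat \<Rightarrow> real \<Rightarrow> real \<Rightarrow> (real \<Rightarrow> real \<Rightarrow> real) \<Rightarrow> real \<Rightarrow> (real \<Rightarrow> real) \<Rightarrow> bool" where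
  "positive_solution N r1 r2 h lam u \<longleftrightarrow>
     continuous_on {0..1} u \<and>
     (\<exists>u' u''. (\<forall>t\<in>{0<..<1}. (u has_real_derivative u' t) (at t)) \<and>
               (\<forall>t\<in>{0<..<1}. (u' has_real_derivative u'' t) (at t)) \<and>
               continuous_on {0<..<1} u'' \<and>
               (\<forall>t\<in>{0<..<1}. u'' t + lam * qfun N r1 r2 t * ffun N r1 r2 h t (u t) = 0)) \<and>
     u 0 = 0 \<and> u 1 = 0 \<and>
     (\<forall>t\<in>{0<..<1}. u t > 0)"

end

theory Submission
  imports Defs "HOL-Complex_Analysis.Complex_Analysis"
begin


definition Iop :: "(real \<Rightarrow> real) \<Rightarrow> real \<Rightarrow> real" where
  "Iop g t = integral {0..t} (\<lambda>s. (t - s) * g s)"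

lemma cont_sub01:
  assumes "continuous_on {0..1} g" "t \<in> {0..1::real}"
  shows "continuous_on {0..t} g"
  using assms by (auto intro: continuous_on_subset)

lemma I_eq:
  assumes g: "continuous_on {0..1} g" and t: "t \<in> {0..1::real}"
  shows "Iop g t = t * integral {0..t} g - integral {0..t} (\<lambda>s. s * g s)"
proof -
  have c: "continuous_on {0..t} g" using cont_sub01[OF g t] .
  have i1: "g integrable_on {0..t}" using c integrable_continuous_interval by blast
  have i2: "(\<lambda>s. s * g s) integrable_on {0..t}"
    by (rule integrable_continuous_interval) (intro continuous_intros c)
  have i3: "(\<lambda>s. t * g s) integrable_on {0..t}"
    by (rule integrable_continuous_interval) (intro continuous_intros c)
  have "Iop g t = integral {0..t} (\<lambda>s. t * g s - s * g s)"
    unfolding Iop_def by (simp add: algebra_simps)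
  also have "\<dots> = integral {0..t} (\<lambda>s. t * g s) - integral {0..t} (\<lambda>s. s * g s)"
    by (rule integral_diff) (use i2 i3 in auto)
  also have "integral {0..t} (\<lambda>s. t * g s) = t * integral {0..t} g"
    by simp
  finally show ?thesis .
qed

lemma I_deriv:
  assumes g: "continuous_on {0..1} g" and t: "t \<in> {0..1::real}"
  shows "(Iop g has_real_derivative integral {0..t} g) (at t within {0..1})"
proof -
  have d1: "((\<lambda>x. integral {0..x} g) has_real_derivative g t) (at t within {0..1})"
    by (rule integral_has_real_derivative[OF g t])
  have c2: "continuous_on {0..1} (\<lambda>s. s * g s)" by (intro continuous_intros g)
  have d2: "((\<lambda>x. integral {0..x} (\<lambda>s. s * g s)) has_real_derivative t * g t) (at t within {0..1})"
    by (rule integral_has_real_derivative[OF c2 t])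
  note d0 = DERIV_diff[OF DERIV_mult[OF DERIV_ident d1] d2]
  have d3: "((\<lambda>x. x * integral {0..x} g - integral {0..x} (\<lambda>s. s * g s)) has_real_derivative
      integral {0..t} g) (at t within {0..1})"
    using d0 by (simp add: algebra_simps)
  show ?thesis
    by (rule has_field_derivative_transform_within[OF _ zero_less_one t])
       (use d3 I_eq[OF g] in auto)
qed

lemma I_bound:
  assumes g: "continuous_on {0..1} g" and t: "t \<in> {0..1::real}"
    and B: "\<And>s. s \<in> {0..1} \<Longrightarrow> \<bar>g s\<bar> \<le> B"
  shows "\<bar>Iop g t\<bar> \<le> B * t * t"
proof -
  have c: "continuous_on {0..t} g" using cont_sub01[OF g t] .
  have i: "(\<lambda>s. (t - s) * g s) integrable_on {0..t}"
    by (rule integrable_continuous_interval) (intro continuous_intros c)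
  have b: "\<bar>(t - s) * g s\<bar> \<le> t * B" if "s \<in> {0..t}" for s
  proof -
    have "\<bar>(t - s) * g s\<bar> = (t - s) * \<bar>g s\<bar>" using that by (simp add: abs_mult)
    also have "\<dots> \<le> t * B"
      using that t B[of s] by (intro mult_mono) auto
    finally show ?thesis .
  qed
  have b1: "(t - s) * g s \<le> t * B" "- (t * B) \<le> (t - s) * g s" if "s \<in> {0..t}" for s
    using b[OF that] by (auto simp: abs_le_iff)
  have "integral {0..t} (\<lambda>s. (t - s) * g s) \<le> integral {0..t} (\<lambda>s. t * B)"
    by (rule integral_le[OF i]) (use b1 in auto)
  moreover have "integral {0..t} (\<lambda>s. - (t * B)) \<le> integral {0..t} (\<lambda>s. (t - s) * g s)"
    by (rule integral_le[OF _ i]) (use b1 in auto)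
  ultimately show ?thesis using t unfolding Iop_def by (auto simp: abs_le_iff algebra_simps)
qed

lemma I_integrable:
  assumes g: "continuous_on {0..1} g" and t: "t \<in> {0..1::real}"
  shows "(\<lambda>s. (t - s) * g s) integrable_on {0..t}"
  by (rule integrable_continuous_interval) (intro continuous_intros cont_sub01[OF g t])

lemma I_nonneg:
  assumes g: "continuous_on {0..1} g" and t: "t \<in> {0..1::real}"
    and B: "\<And>s. s \<in> {0..1} \<Longrightarrow> 0 \<le> g s"
  shows "0 \<le> Iop g t"
  unfolding Iop_def
  by (rule integral_nonneg) (use t B I_integrable[OF g t] in auto)

lemma I_diff:
  assumes g: "continuous_on {0..1} g" "continuous_on {0..1} f" and t: "t \<in> {0..1::real}"
  shows "Iop g t - Iop f t = Iop (\<lambda>s. g s - f s) t"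
proof -
  have c: "continuous_on {0..t} g" "continuous_on {0..t} f" using cont_sub01[OF _ t] g by auto
  have i: "(\<lambda>s. (t - s) * g s) integrable_on {0..t}" "(\<lambda>s. (t - s) * f s) integrable_on {0..t}"
    by (rule integrable_continuous_interval, intro continuous_intros c)+
  show ?thesis unfolding Iop_def
    by (subst integral_diff[OF i, symmetric]) (simp add: algebra_simps)
qed

lemma secant:
  fixes u v :: "real \<Rightarrow> real"
  assumes d: "\<And>x. x \<in> {0..1} \<Longrightarrow> (u has_real_derivative v x) (at x within {0..1})"
    and m: "\<And>x y. x \<in> {0..1} \<Longrightarrow> y \<in> {0..1} \<Longrightarrow> x \<le> y \<Longrightarrow> v y \<le> v x"
    and xy: "0 \<le> x" "x < y" "y \<le> 1"
  shows "v y * (y - x) \<le> u y - u x \<and> u y - u x \<le> v x * (y - x)"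
proof -
  have "\<exists>z\<in>{x<..<y}. u y - u x = (\<lambda>h. h * v z) (y - x)"
  proof (rule mvt_simple[OF xy(2)])
    fix z assume "x \<le> z" "z \<le> y"
    then have "(u has_real_derivative v z) (at z within {x..y})"
      using d[of z] xy by (auto intro: DERIV_subset)
    then show "(u has_derivative (\<lambda>h. h * v z)) (at z within {x..y})"
      by (simp add: has_field_derivative_def mult.commute[of _ "v z"])
  qed
  then obtain z where z: "x < z" "z < y" "u y - u x = (y - x) * v z" by auto
  have "v y \<le> v z" "v z \<le> v x" using m z xy by auto
  then show ?thesis using z xy
    by (auto simp: mult.commute intro: mult_left_mono)
qed

lemma chord:
  fixes u v :: "real \<Rightarrow> real"
  assumes d: "\<And>x. x \<in> {0..1} \<Longrightarrow> (u has_real_derivative v x) (at x within {0..1})"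
    and m: "\<And>x y. x \<in> {0..1} \<Longrightarrow> y \<in> {0..1} \<Longrightarrow> x \<le> y \<Longrightarrow> v y \<le> v x"
    and xyz: "0 \<le> x" "x < y" "y < z" "z \<le> 1"
  shows "(u z - u y) * (y - x) \<le> (u y - u x) * (z - y)"
proof -
  have a: "v y * (y - x) \<le> u y - u x" using secant[OF d m, of x y] xyz by auto
  have b: "u z - u y \<le> v y * (z - y)" using secant[OF d m, of y z] xyz by auto
  have "(u z - u y) * (y - x) \<le> v y * (z - y) * (y - x)"
    using b xyz by (intro mult_right_mono) auto
  also have "\<dots> = v y * (y - x) * (z - y)" by simp
  also have "\<dots> \<le> (u y - u x) * (z - y)"
    using a xyz by (intro mult_right_mono) auto
  finally show ?thesis .
qed

lemma I_cont:
  assumes g: "continuous_on {0..1} g"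
  shows "continuous_on {0..1} (Iop g)"
  unfolding continuous_on_eq_continuous_within
  using I_deriv[OF g] DERIV_continuous by blast

lemma conc_setup:
  assumes g: "continuous_on {0..1} g" and gpos: "\<And>s. s \<in> {0..1} \<Longrightarrow> 0 \<le> g s"
    and u: "\<And>t. t \<in> {0..1} \<Longrightarrow> u t = a * t - lam * Iop g t" and lam: "0 \<le> lam"
  shows "\<And>x. x \<in> {0..1} \<Longrightarrow> (u has_real_derivative (a - lam * integral {0..x} g)) (at x within {0..1})"
    and "\<And>x y. x \<in> {0..1} \<Longrightarrow> y \<in> {0..1} \<Longrightarrow> x \<le> y \<Longrightarrow>
           a - lam * integral {0..y} g \<le> a - lam * integral {0..x} g"
proof -
  fix x :: real assume x: "x \<in> {0..1}"
  have "((\<lambda>t. a * t - lam * Iop g t) has_real_derivative (a * 1 - lam * integral {0..x} g)) (at x within {0..1})"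
    by (intro DERIV_diff DERIV_cmult DERIV_ident I_deriv[OF g x])
  then have "((\<lambda>t. a * t - lam * Iop g t) has_real_derivative (a - lam * integral {0..x} g)) (at x within {0..1})"
    by simp
  then show "(u has_real_derivative (a - lam * integral {0..x} g)) (at x within {0..1})"
    by (rule has_field_derivative_transform_within[OF _ zero_less_one x]) (use u in auto)
next
  fix x y :: real assume xy: "x \<in> {0..1}" "y \<in> {0..1}" "x \<le> y"
  have i: "g integrable_on {0..y}"
    by (rule integrable_continuous_interval) (rule continuous_on_subset[OF g], use xy in auto)
  have "integral {0..x} g + integral {x..y} g = integral {0..y} g"
    using Henstock_Kurzweil_Integration.integral_combine[where a=0 and c=x and b=y and f=g] xy i by auto
  moreover have "0 \<le> integral {x..y} g"
    by (rule integral_nonneg) (rule integrable_on_subinterval[OF i], use xy gpos in auto)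
  ultimately show "a - lam * integral {0..y} g \<le> a - lam * integral {0..x} g"
    using lam by (smt (verit) mult_left_mono)
qed

lemma pos_interior:
  fixes u v :: "real \<Rightarrow> real"
  assumes d: "\<And>x. x \<in> {0..1} \<Longrightarrow> (u has_real_derivative v x) (at x within {0..1})"
    and m: "\<And>x y. x \<in> {0..1} \<Longrightarrow> y \<in> {0..1} \<Longrightarrow> x \<le> y \<Longrightarrow> v y \<le> v x"
    and u1: "0 \<le> u 1"
    and small: "\<And>e. 0 < e \<Longrightarrow> \<exists>s. 0 < s \<and> s < e \<and> 0 < u s"
    and t: "0 < t" "t < 1"
  shows "0 < u t"
proof -
  obtain s where s: "0 < s" "s < t" "0 < u s" using small[of t] t by auto
  have c: "(u 1 - u t) * (t - s) \<le> (u t - u s) * (1 - t)"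
    by (rule chord[OF d m]) (use s t in auto)
  have "- u t * (t - s) \<le> (u 1 - u t) * (t - s)"
    using u1 s by (intro mult_right_mono) auto
  with c have "u s * (1 - t) \<le> u t * (1 - s)" by (simp add: algebra_simps)
  moreover have "0 < u s * (1 - t)" using s t by simp
  ultimately have "0 < u t * (1 - s)" by linarith
  then show ?thesis using s t by (simp add: zero_less_mult_iff)
qed



lemma Iop_0[simp]: "Iop g 0 = 0"
  unfolding Iop_def by simp

lemma small_neg:
  fixes u g :: "real \<Rightarrow> real"
  assumes g: "continuous_on {0..1} g" and gpos: "\<And>s. s\<in>{0..1} \<Longrightarrow> 0 \<le> g s"
   and gB: "\<And>s. s\<in>{0..1} \<Longrightarrow> g s \<le> B"
   and u: "\<And>t. t\<in>{0..1} \<Longrightarrow> u t = a*t - lam * Iop g t" and lam: "0 < lam"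
   and a: "0 < a" "a < dlt"
   and d: "0 < d" "d \<le> 1/4"
   and gbig: "\<And>s. s \<in> {1/2..3/4} \<Longrightarrow> 0 < u (s - d) \<Longrightarrow> u (s - d) < dlt \<Longrightarrow> \<mu> * u (s - d) \<le> g s"
   and lm: "64 < lam * \<mu>"
  shows "u 1 < 0"
proof (rule ccontr)
  assume "\<not> u 1 < 0" hence u1: "0 \<le> u 1" by simp
  define v where "v x = a - lam * integral {0..x} g" for x
  have D: "\<And>x. x\<in>{0..1} \<Longrightarrow> (u has_real_derivative v x) (at x within {0..1})"
    using conc_setup(1)[OF g gpos u] lam unfolding v_def by auto
  have M: "\<And>x y. x \<in> {0..1} \<Longrightarrow> y \<in> {0..1} \<Longrightarrow> x \<le> y \<Longrightarrow> v y \<le> v x"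
    using conc_setup(2)[OF g gpos u] lam unfolding v_def by auto
  have B0: "0 \<le> B" using gpos[of 0] gB[of 0] by auto
  have Iub: "Iop g t \<le> B*t*t" if "t\<in>{0..1}" for t
    using I_bound[OF g that, of B] gpos gB by (force simp: abs_le_iff)
  have Inn: "0 \<le> Iop g t" if "t\<in>{0..1}" for t
    using I_nonneg[OF g that] gpos by auto
  have u0: "u 0 = 0" using u[of 0] by simp
  have ule: "u t \<le> a*t" if "t\<in>{0..1}" for t
    using u[OF that] Inn[OF that] lam by (simp add: mult_nonneg_nonneg)
  have small: "\<exists>s. 0<s \<and> s<e \<and> 0 < u s" if e: "0 < e" for e
  proof -
    define s where "s = min (e/2) (min (1/2) (a/(2*(lam*B+1))))"
    have "0 \<le> lam*B" using lam B0 by simp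
    hence den: "0 < 2*(lam*B+1)" by (smt (verit))
    have "0 < a/(2*(lam*B+1))" using a den by simp
    hence s0: "0 < s" using e unfolding s_def by simp
    have se: "s < e" using e unfolding s_def by linarith
    have s1: "s \<in> {0..1}" using s0 unfolding s_def by auto
    have "s \<le> a/(2*(lam*B+1))" unfolding s_def by linarith
    hence "s * (2*(lam*B+1)) \<le> a" using pos_le_divide_eq[OF den] by blast
    moreover have lt: "lam*B < 2*(lam*B+1)" using \<open>0 \<le> lam*B\<close> by (simp add: algebra_simps)
    moreover have "lam * B * s < (2*(lam*B+1)) * s"
      using mult_strict_right_mono[OF lt s0] .
    ultimately have h: "lam * B * s < a" by (simp add: mult.commute)
    have "lam * Iop g s \<le> lam*(B * s * s)" using Iub[OF s1] lam by (intro mult_left_mono) auto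
    hence "u s \<ge> a * s - lam*(B * s * s)" using u[OF s1] by linarith
    moreover have "a * s - lam*(B * s * s) = s * (a - lam * B * s)" by (simp add: algebra_simps)
    moreover have "0 < s * (a - lam * B * s)" using h s0 by simp
    ultimately show ?thesis using s0 se by auto
  qed
  have pos: "0 < u t" if "0 < t" "t < 1" for t
    by (rule pos_interior[OF D M u1 small that])
  define p where "p = u (1/2)"
  have p0: "0 < p" unfolding p_def by (rule pos) auto
  have low: "p/2 \<le> u t" if t: "t \<in> {1/4..3/4}" for t
  proof (cases "t < 1/2")
    case True
    have "(p - u t) * (t - 0) \<le> (u t - u 0) * (1/2 - t)"
      unfolding p_def by (rule chord[OF D M]) (use t True in auto)
    hence "p * t \<le> u t / 2" using u0 by (simp add: algebra_simps)
    moreover have "p * (1/4) \<le> p * t" using p0 t by (intro mult_left_mono) auto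
    ultimately show ?thesis by simp
  next
    case False
    show ?thesis
    proof (cases "t = 1/2")
      case True then have "u t = p" unfolding p_def by (rule arg_cong)
      then show ?thesis using p0 by simp
    next
      case F2: False
      have c: "(u 1 - u t) * (t - 1/2) \<le> (u t - u (1/2)) * (1 - t)"
        by (rule chord[OF D M]) (use t False F2 in auto)
      have "- u t * (t - 1/2) \<le> (u 1 - u t) * (t - 1/2)"
        using u1 False by (intro mult_right_mono) auto
      with c have "p * (1 - t) \<le> u t / 2" unfolding p_def by (simp add: algebra_simps)
      moreover have "p * (1/4) \<le> p * (1 - t)" using p0 t by (intro mult_left_mono) auto
      ultimately show ?thesis by simp
    qed
  qed
  have mu0: "0 < \<mu>"
  proof (rule ccontr)
    assume "\<not> 0 < \<mu>"
    hence "lam * \<mu> \<le> 0" using lam by (simp add: mult_nonneg_nonpos)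
    with lm show False by simp
  qed
  have gl: "\<mu> * (p/2) \<le> g s" if s: "s \<in> {1/2..3/4}" for s
  proof -
    have sd: "s - d \<in> {1/4..3/4}" using s d by auto
    have l: "p/2 \<le> u (s - d)" by (rule low[OF sd])
    have "u (s - d) \<le> a * (s - d)" using ule sd by auto
    also have "\<dots> < a" using a sd by simp
    finally have "u (s - d) < dlt" using a by simp
    hence "\<mu> * u (s - d) \<le> g s" using gbig[OF s] l p0 by simp
    moreover have "\<mu> * (p/2) \<le> \<mu> * u (s - d)" using l mu0 by simp
    ultimately show ?thesis by simp
  qed
  have gi: "g integrable_on {0..1}" by (rule integrable_continuous_interval[OF g])
  have gi2: "g integrable_on {0..3/4}" by (rule integrable_on_subinterval[OF gi]) auto
  have gi3: "g integrable_on {1/2..3/4}" by (rule integrable_on_subinterval[OF gi]) auto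
  have "integral {1/2..3/4::real} (\<lambda>s. \<mu> * (p/2)) \<le> integral {1/2..3/4} g"
    by (rule integral_le[OF _ gi3]) (use gl in auto)
  hence intl: "\<mu> * p / 8 \<le> integral {1/2..3/4} g" by simp
  have comb: "integral {0..1/2} g + integral {1/2..3/4} g = integral {0..3/4} g"
    using Henstock_Kurzweil_Integration.integral_combine[where a=0 and c="1/2" and b="3/4" and f=g] gi2
    by auto
  have vdiff: "v (1/2) - v (3/4) = lam * integral {1/2..3/4} g"
    unfolding v_def using comb[symmetric] by (simp add: algebra_simps)
  have s1: "v (1/2) * (1/2 - 0) \<le> u (1/2) - u 0" using secant[OF D M, of 0 "1/2"] by auto
  have s2: "u (3/4) - u (1/2) \<le> v (1/2) * (3/4 - 1/2)" using secant[OF D M, of "1/2" "3/4"] by auto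
  have s3: "v 1 * (1 - 3/4) \<le> u 1 - u (3/4) \<and> u 1 - u (3/4) \<le> v (3/4) * (1 - 3/4)"
    using secant[OF D M, of "3/4" 1] by auto
  have s1': "v (1/2) \<le> 2*p" using s1 u0 unfolding p_def by simp
  have s2': "u (3/4) \<le> p + v (1/2) / 4" using s2 unfolding p_def by simp
  have s3': "- 4 * u (3/4) \<le> v (3/4)" using s3 u1 by simp
  have "lam * (\<mu> * p / 8) \<le> lam * integral {1/2..3/4} g" using intl lam by simp
  hence "lam * (\<mu> * p / 8) \<le> 8 * p" using vdiff s1' s2' s3' by linarith
  hence "(lam * \<mu>) * p \<le> 64 * p" by (simp add: algebra_simps)
  moreover have "64 * p < (lam * \<mu>) * p" using lm p0 by simp
  ultimately show False by simp
qed

lemma small_pos: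
  fixes u g :: "real \<Rightarrow> real"
  assumes g: "continuous_on {0..1} g" and gpos: "\<And>s. s\<in>{0..1} \<Longrightarrow> 0 \<le> g s"
   and gB: "\<And>s. s\<in>{0..1} \<Longrightarrow> g s \<le> B"
   and u: "\<And>t. t\<in>{0..1} \<Longrightarrow> u t = a*t - lam * Iop g t" and lam: "0 < lam"
   and a: "0 < a" and e: "0 < e"
  shows "\<exists>s. 0<s \<and> s<e \<and> 0 < u s"
proof -
  have B0: "0 \<le> B" using gpos[of 0] gB[of 0] by auto
  have Iub: "Iop g t \<le> B*t*t" if "t\<in>{0..1}" for t
    using I_bound[OF g that, of B] gpos gB by (force simp: abs_le_iff)
  define s where "s = min (e/2) (min (1/2) (a/(2*(lam*B+1))))"
  have "0 \<le> lam*B" using lam B0 by simp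
  hence den: "0 < 2*(lam*B+1)" by (smt (verit))
  have "0 < a/(2*(lam*B+1))" using a den by simp
  hence s0: "0 < s" using e unfolding s_def by simp
  have se: "s < e" using e unfolding s_def by linarith
  have s1: "s \<in> {0..1}" using s0 unfolding s_def by auto
  have "s \<le> a/(2*(lam*B+1))" unfolding s_def by linarith
  hence "s * (2*(lam*B+1)) \<le> a" using pos_le_divide_eq[OF den] by blast
  moreover have lt: "lam*B < 2*(lam*B+1)" using \<open>0 \<le> lam*B\<close> by (simp add: algebra_simps)
  moreover have "lam * B * s < (2*(lam*B+1)) * s"
    using mult_strict_right_mono[OF lt s0] .
  ultimately have h: "lam * B * s < a" by (simp add: mult.commute)
  have "lam * Iop g s \<le> lam*(B * s * s)" using Iub[OF s1] lam by (intro mult_left_mono) auto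
  hence "u s \<ge> a * s - lam*(B * s * s)" using u[OF s1] by linarith
  moreover have "a * s - lam*(B * s * s) = s * (a - lam * B * s)" by (simp add: algebra_simps)
  moreover have "0 < s * (a - lam * B * s)" using h s0 by simp
  ultimately show ?thesis using s0 se by auto
qed

lemma lip:
  fixes u g :: "real \<Rightarrow> real"
  assumes g: "continuous_on {0..1} g" and gpos: "\<And>s. s\<in>{0..1} \<Longrightarrow> 0 \<le> g s"
   and gB: "\<And>s. s\<in>{0..1} \<Longrightarrow> g s \<le> B"
   and u: "\<And>t. t\<in>{0..1} \<Longrightarrow> u t = a*t - lam * Iop g t" and lam: "0 \<le> lam"
   and a: "\<bar>a\<bar> \<le> A0" and xy: "x \<in> {0..1}" "y \<in> {0..1}"
  shows "\<bar>u x - u y\<bar> \<le> (A0 + lam*B) * \<bar>x - y\<bar>"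
proof -
  define v where "v x = a - lam * integral {0..x} g" for x
  define C where "C = A0 + lam*B"
  have D: "\<And>x. x\<in>{0..1} \<Longrightarrow> (u has_real_derivative v x) (at x within {0..1})"
    using conc_setup(1)[OF g gpos u] lam unfolding v_def by auto
  have M: "\<And>x y. x \<in> {0..1} \<Longrightarrow> y \<in> {0..1} \<Longrightarrow> x \<le> y \<Longrightarrow> v y \<le> v x"
    using conc_setup(2)[OF g gpos u] lam unfolding v_def by auto
  have gi: "g integrable_on {0..1}" by (rule integrable_continuous_interval[OF g])
  have vb: "\<bar>v z\<bar> \<le> C" if z: "z \<in> {0..1}" for z
  proof -
    have gz: "g integrable_on {0..z}" by (rule integrable_on_subinterval[OF gi]) (use z in auto)
    have i0: "0 \<le> integral {0..z} g" by (rule integral_nonneg[OF gz]) (use z gpos in auto)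
    have "integral {0..z} g \<le> integral {0..z} (\<lambda>_. B)"
      by (rule integral_le[OF gz]) (use z gB in auto)
    also have "\<dots> = z * B" using z by simp
    also have "\<dots> \<le> B" using z gpos[of 0] gB[of 0] by (simp add: mult_left_le_one_le)
    finally have i1: "integral {0..z} g \<le> B" .
    have "lam * integral {0..z} g \<le> lam * B" using mult_left_mono[OF i1 lam] .
    moreover have "0 \<le> lam * integral {0..z} g" using i0 lam by simp
    ultimately show ?thesis unfolding v_def C_def using a by (simp add: abs_le_iff)
  qed
  have main: "\<bar>u q - u p\<bar> \<le> C * (q - p)" if pq: "p \<in> {0..1}" "q \<in> {0..1}" "p < q" for p q
  proof -
    have sc: "v q * (q - p) \<le> u q - u p \<and> u q - u p \<le> v p * (q - p)"
      by (rule secant[OF D M]) (use pq in auto)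
    have "v p * (q - p) \<le> C * (q - p)" using vb[OF pq(1)] pq by (intro mult_right_mono) auto
    moreover have "- C * (q - p) \<le> v q * (q - p)" using vb[OF pq(2)] pq by (intro mult_right_mono) auto
    ultimately show ?thesis using sc by (simp add: abs_le_iff)
  qed
  show ?thesis
  proof (cases x y rule: linorder_cases)
    case less then show ?thesis using main[OF xy(1) xy(2)] unfolding C_def by (simp add: abs_minus_commute)
  next
    case equal then show ?thesis by simp
  next
    case greater then show ?thesis using main[OF xy(2) xy(1)] unfolding C_def by simp
  qed
qed



fun W :: "(real \<Rightarrow> real \<Rightarrow> real) \<Rightarrow> real \<Rightarrow> real \<Rightarrow> real \<Rightarrow> nat \<Rightarrow> real \<Rightarrow> real" where
  "W K lam d a 0 = (\<lambda>t. a * t)"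
| "W K lam d a (Suc k) = (\<lambda>t. a * t - lam * Iop (\<lambda>s. K s (W K lam d a k (max 0 (s - d)))) t)"

locale Kset =
  fixes K :: "real \<Rightarrow> real \<Rightarrow> real" and Kmax lam :: real
  assumes Kcont: "continuous_on ({0..1} \<times> UNIV) (\<lambda>z. K (fst z) (snd z))"
  and Kunif: "\<And>e. 0 < e \<Longrightarrow> \<exists>d>0. \<forall>t\<in>{0..1}. \<forall>x y. \<bar>x - y\<bar> < d \<longrightarrow> \<bar>K t x - K t y\<bar> < e"
  and Kbd: "\<And>t x. t \<in> {0..1} \<Longrightarrow> 0 \<le> K t x \<and> K t x \<le> Kmax"
  and K0: "\<And>t x. t \<in> {0..1} \<Longrightarrow> x \<le> 0 \<Longrightarrow> K t x = 0"
  and lam: "0 < lam"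
begin

lemma Kmax0: "0 \<le> Kmax" using Kbd[of 0 0] by auto

lemma Kcomp:
  assumes w: "continuous_on {0..1} w"
  shows "continuous_on {0..1} (\<lambda>s. K s (w s))"
proof -
  have c: "continuous_on {0..1} (\<lambda>s. (s, w s))" by (intro continuous_intros w)
  have "(\<lambda>s. (s, w s)) ` {0..1} \<subseteq> {0..1} \<times> UNIV" by auto
  from continuous_on_compose2[OF Kcont c this] show ?thesis by simp
qed

lemma shift_cont:
  fixes d :: real
  assumes w: "continuous_on {0..1} w" and d: "0 \<le> d"
  shows "continuous_on {0..1} (\<lambda>s. w (max 0 (s - d)))"
proof -
  have c: "continuous_on {0..1::real} (\<lambda>s. max 0 (s - d))" by (intro continuous_intros)
  have "(\<lambda>s. max 0 (s - d)) ` {0..1} \<subseteq> {0..1}" using d by auto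
  from continuous_on_compose2[OF w c this] show ?thesis .
qed

lemma gcont:
  assumes w: "continuous_on {0..1} w" and d: "0 \<le> d"
  shows "continuous_on {0..1} (\<lambda>s. K s (w (max 0 (s - d))))"
  by (rule Kcomp[OF shift_cont[OF w d]])

lemma W_cont:
  assumes d: "0 \<le> d"
  shows "continuous_on {0..1} (W K lam d a k)"
proof (induction k)
  case 0 then show ?case by (simp add: continuous_intros)
next
  case (Suc k)
  have "continuous_on {0..1} (Iop (\<lambda>s. K s (W K lam d a k (max 0 (s - d)))))"
    by (rule I_cont[OF gcont[OF Suc d]])
  then show ?case by (simp add: continuous_intros)
qed

lemma W_g_props:
  assumes d: "0 \<le> d"
  shows "continuous_on {0..1} (\<lambda>s. K s (W K lam d a k (max 0 (s - d))))"
    and "\<And>s. s \<in> {0..1} \<Longrightarrow> 0 \<le> K s (W K lam d a k (max 0 (s - d)))"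
    and "\<And>s. s \<in> {0..1} \<Longrightarrow> K s (W K lam d a k (max 0 (s - d))) \<le> Kmax"
  using gcont[OF W_cont[OF d] d] Kbd by auto

lemma W_agree:
  assumes d: "0 < d"
  shows "t \<in> {0..1} \<Longrightarrow> t \<le> real (Suc k) * d \<Longrightarrow> W K lam d a (Suc k) t = W K lam d a k t"
proof (induction k arbitrary: t)
  case 0
  have "Iop (\<lambda>s. K s (a * max 0 (s - d))) t = integral {0..t} (\<lambda>s. 0)"
    unfolding Iop_def
  proof (rule integral_cong)
    fix s assume s: "s \<in> {0..t}"
    then have "max 0 (s - d) = 0" using 0 by auto
    then show "(t - s) * K s (a * max 0 (s - d)) = 0" using K0[of s 0] s 0 by auto
  qed
  then show ?case by simp
next
  case (Suc k)
  have "Iop (\<lambda>s. K s (W K lam d a (Suc k) (max 0 (s - d)))) t =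
        Iop (\<lambda>s. K s (W K lam d a k (max 0 (s - d)))) t"
    unfolding Iop_def
  proof (rule integral_cong)
    fix s assume s: "s \<in> {0..t}"
    have m1: "max 0 (s - d) \<in> {0..1}" using s Suc.prems d by auto
    have m2: "max 0 (s - d) \<le> real (Suc k) * d"
      using s Suc.prems d by (auto simp: algebra_simps)
    show "(t - s) * K s (W K lam d a (Suc k) (max 0 (s - d))) =
          (t - s) * K s (W K lam d a k (max 0 (s - d)))"
      using Suc.IH[OF m1 m2] by simp
  qed
  then show ?case by simp
qed

lemma W_fix:
  assumes d: "0 < d" and n: "1 \<le> real n * d" and t: "t \<in> {0..1}"
  shows "W K lam d a n t = a * t - lam * Iop (\<lambda>s. K s (W K lam d a n (max 0 (s - d)))) t"
proof -
  have "t \<le> real (Suc n) * d" using n t d by (auto simp: algebra_simps)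
  then have "W K lam d a (Suc n) t = W K lam d a n t" using W_agree[OF d t] by blast
  then show ?thesis by simp
qed

lemma W_conta:
  assumes d: "0 \<le> d"
  shows "0 < e \<Longrightarrow> \<exists>\<delta>>0. \<forall>b. \<bar>b - a\<bar> < \<delta> \<longrightarrow> (\<forall>t\<in>{0..1}. \<bar>W K lam d b k t - W K lam d a k t\<bar> < e)"
proof (induction k arbitrary: e)
  case 0
  show ?case
  proof (intro exI[of _ e] conjI allI impI ballI)
    fix b t :: real assume b: "\<bar>b - a\<bar> < e" and t: "t \<in> {0..1}"
    have "\<bar>b * t - a * t\<bar> = \<bar>b - a\<bar> * t" using t by (simp add: abs_mult left_diff_distrib[symmetric])
    also have "\<dots> \<le> \<bar>b - a\<bar>" using t by (simp add: mult_left_le)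
    finally show "\<bar>W K lam d b 0 t - W K lam d a 0 t\<bar> < e" using b by simp
  qed (use 0 in auto)
next
  case (Suc k)
  define e' where "e' = e / (2 * lam)"
  have e': "0 < e'" using Suc.prems lam unfolding e'_def by simp
  obtain \<eta> where \<eta>: "\<eta> > 0" "\<forall>t\<in>{0..1}. \<forall>x y. \<bar>x - y\<bar> < \<eta> \<longrightarrow> \<bar>K t x - K t y\<bar> < e'"
    using Kunif[OF e'] by auto
  obtain \<delta>1 where \<delta>1: "\<delta>1 > 0" "\<forall>b. \<bar>b - a\<bar> < \<delta>1 \<longrightarrow> (\<forall>t\<in>{0..1}. \<bar>W K lam d b k t - W K lam d a k t\<bar> < \<eta>)"
    using Suc.IH[OF \<eta>(1)] by auto
  show ?case
  proof (intro exI[of _ "min \<delta>1 (e/2)"] conjI allI impI ballI)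
    show "0 < min \<delta>1 (e/2)" using \<delta>1 Suc.prems by simp
    fix b t :: real assume b: "\<bar>b - a\<bar> < min \<delta>1 (e/2)" and t: "t \<in> {0..1}"
    define gb where "gb = (\<lambda>s. K s (W K lam d b k (max 0 (s - d))))"
    define ga where "ga = (\<lambda>s. K s (W K lam d a k (max 0 (s - d))))"
    have cb: "continuous_on {0..1} gb" unfolding gb_def by (rule W_g_props(1)[OF d])
    have ca: "continuous_on {0..1} ga" unfolding ga_def by (rule W_g_props(1)[OF d])
    have gd: "\<bar>gb s - ga s\<bar> \<le> e'" if s: "s \<in> {0..1}" for s
    proof -
      have "max 0 (s - d) \<in> {0..1}" using s d by auto
      then have "\<bar>W K lam d b k (max 0 (s - d)) - W K lam d a k (max 0 (s - d))\<bar> < \<eta>"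
        using \<delta>1(2) b by auto
      then show ?thesis using \<eta>(2) s unfolding gb_def ga_def by force
    qed
    have Ib: "\<bar>Iop (\<lambda>s. gb s - ga s) t\<bar> \<le> e' * t * t"
      by (rule I_bound[OF _ t]) (use cb ca gd in \<open>auto intro: continuous_intros\<close>)
    also have "\<dots> \<le> e'" using t e' by (simp add: mult_le_one mult_left_le)
    finally have Ib': "\<bar>Iop gb t - Iop ga t\<bar> \<le> e'" using I_diff[OF cb ca t] by simp
    have "\<bar>b * t - a * t\<bar> = \<bar>b - a\<bar> * t" using t by (simp add: abs_mult left_diff_distrib[symmetric])
    also have "\<dots> \<le> \<bar>b - a\<bar>" using t by (simp add: mult_left_le)
    finally have bt: "\<bar>b * t - a * t\<bar> < e/2" using b by simp
    have "\<bar>lam * Iop gb t - lam * Iop ga t\<bar> = lam * \<bar>Iop gb t - Iop ga t\<bar>"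
      using lam by (simp add: abs_mult right_diff_distrib[symmetric])
    also have "\<dots> \<le> lam * e'" using Ib' lam by simp
    also have "\<dots> = e/2" unfolding e'_def using lam by simp
    finally have l2: "\<bar>lam * Iop gb t - lam * Iop ga t\<bar> \<le> e/2" .
    have eq: "W K lam d b (Suc k) t - W K lam d a (Suc k) t = (b*t - a*t) - (lam * Iop gb t - lam * Iop ga t)"
      unfolding gb_def ga_def by simp
    show "\<bar>W K lam d b (Suc k) t - W K lam d a (Suc k) t\<bar> < e"
      unfolding eq using abs_triangle_ineq4[of "b*t - a*t" "lam * Iop gb t - lam * Iop ga t"] l2 bt
      by linarith
  qed
qed

lemma W_cont_a:
  assumes d: "0 \<le> d" and that: "t0 \<in> {0..1}"
  shows "continuous_on S (\<lambda>a. W K lam d a k t0)"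
  unfolding continuous_on_iff
proof (intro ballI allI impI)
  fix a e :: real assume "a \<in> S" "0 < e"
  obtain \<delta> where "\<delta> > 0" "\<forall>b. \<bar>b - a\<bar> < \<delta> \<longrightarrow> (\<forall>t\<in>{0..1}. \<bar>W K lam d b k t - W K lam d a k t\<bar> < e)"
    using W_conta[OF d \<open>0 < e\<close>] by blast
  then show "\<exists>\<delta>>0. \<forall>b\<in>S. dist b a < \<delta> \<longrightarrow> dist (W K lam d b k t0) (W K lam d a k t0) < e"
    using that by (auto simp: dist_real_def)
qed

end



context Kset begin

lemma step1:
  assumes R: "0 < R" and small: "lam * Kmax < R" and mu: "64 < lam * \<mu>"
    and a0: "0 < a0" "a0 < dlt" "a0 \<le> R"
    and Ks: "\<And>t x. t \<in> {1/2..3/4} \<Longrightarrow> 0 < x \<Longrightarrow> x < dlt \<Longrightarrow> \<mu> * x \<le> K t x"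
    and d: "0 < d" "d \<le> 1/4" and n: "1 \<le> real n * d"
  shows "\<exists>a\<in>{a0..R}. W K lam d a n 1 = 0"
proof -
  have neg: "W K lam d a0 n 1 < 0"
  proof (rule small_neg[where g="\<lambda>s. K s (W K lam d a0 n (max 0 (s - d)))" and B=Kmax and a=a0
        and lam=lam and dlt=dlt and d=d and \<mu>=\<mu>])
    show "continuous_on {0..1} (\<lambda>s. K s (W K lam d a0 n (max 0 (s - d))))"
      using W_g_props(1) d by simp
    show "\<And>s. s \<in> {0..1} \<Longrightarrow> 0 \<le> K s (W K lam d a0 n (max 0 (s - d)))"
      using W_g_props(2) d by simp
    show "\<And>s. s \<in> {0..1} \<Longrightarrow> K s (W K lam d a0 n (max 0 (s - d))) \<le> Kmax"
      using W_g_props(3) d by simp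
    show "\<And>t. t \<in> {0..1} \<Longrightarrow> W K lam d a0 n t = a0 * t - lam * Iop (\<lambda>s. K s (W K lam d a0 n (max 0 (s - d)))) t"
      using W_fix[OF d(1) n] by blast
    show "\<And>s. s \<in> {1/2..3/4} \<Longrightarrow> 0 < W K lam d a0 n (s - d) \<Longrightarrow> W K lam d a0 n (s - d) < dlt \<Longrightarrow>
            \<mu> * W K lam d a0 n (s - d) \<le> K s (W K lam d a0 n (max 0 (s - d)))"
    proof -
      fix s :: real assume s: "s \<in> {1/2..3/4}" and p: "0 < W K lam d a0 n (s - d)" "W K lam d a0 n (s - d) < dlt"
      have "max 0 (s - d) = s - d" using s d by auto
      then show "\<mu> * W K lam d a0 n (s - d) \<le> K s (W K lam d a0 n (max 0 (s - d)))"
        using Ks[OF s p] by simp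
    qed
  qed (use lam a0 d mu in auto)
  have pos: "0 < W K lam d R n 1"
  proof -
    have "W K lam d R n 1 = R - lam * Iop (\<lambda>s. K s (W K lam d R n (max 0 (s - d)))) 1"
      using W_fix[OF d(1) n, of 1] by simp
    moreover have "\<bar>Iop (\<lambda>s. K s (W K lam d R n (max 0 (s - d)))) 1\<bar> \<le> Kmax * 1 * 1"
      by (rule I_bound) (use W_g_props[OF less_imp_le[OF d(1)]] in \<open>auto simp: abs_le_iff\<close>)
    ultimately have "W K lam d R n 1 \<ge> R - lam * Kmax"
      using lam by (smt (verit, best) abs_le_iff mult_left_mono)
    then show ?thesis using small by simp
  qed
  have "\<exists>x. a0 \<le> x \<and> x \<le> R \<and> W K lam d x n 1 = 0"
    by (rule IVT'[of "\<lambda>a. W K lam d a n 1"]) (use neg pos a0 W_cont_a[of d 1] d in auto)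
  then show ?thesis by auto
qed

end



context Kset begin

lemma exist:
  assumes R: "0 < R" and small: "lam * Kmax < R" and mu: "64 < lam * \<mu>" and dlt: "0 < dlt"
    and Ks: "\<And>t x. t \<in> {1/2..3/4} \<Longrightarrow> 0 < x \<Longrightarrow> x < dlt \<Longrightarrow> \<mu> * x \<le> K t x"
  shows "\<exists>A U. 0 < A \<and> A \<le> R \<and> continuous_on {0..1} U \<and> U 1 = 0 \<and>
           (\<forall>t\<in>{0..1}. U t = A*t - lam * Iop (\<lambda>s. K s (U s)) t)"
proof -
  define a0 where "a0 = min dlt R / 2"
  have a0: "0 < a0" "a0 < dlt" "a0 \<le> R" using R dlt unfolding a0_def by auto
  define dd where "dd n = 1 / (real n + 4)" for n :: nat
  have dd: "0 < dd n" "dd n \<le> 1/4" "1 \<le> real (n+4) * dd n" for n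
    unfolding dd_def by (auto simp: field_simps)
  have "\<forall>n. \<exists>a\<in>{a0..R}. W K lam (dd n) a (n+4) 1 = 0"
    using step1[OF R small mu a0 Ks dd(1) dd(2) dd(3)] by blast
  then obtain aa where aa: "\<And>n. aa n \<in> {a0..R}" "\<And>n. W K lam (dd n) (aa n) (n+4) 1 = 0"
    by metis
  define F where "F n = W K lam (dd n) (aa n) (n+4)" for n
  define g where "g n = (\<lambda>s. K s (F n (max 0 (s - dd n))))" for n
  define L where "L = R + lam * Kmax"
  have L0: "0 < L" unfolding L_def using R lam Kmax0 by (simp add: add_pos_nonneg)
  have Ffix: "F n t = aa n * t - lam * Iop (g n) t" if "t \<in> {0..1}" for n t
    unfolding F_def g_def using W_fix[OF dd(1) dd(3) that] by blast
  have gc: "continuous_on {0..1} (g n)" for n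
    unfolding g_def F_def using W_g_props(1) dd(1) less_imp_le by blast
  have gpos: "0 \<le> g n s" if "s \<in> {0..1}" for n s
    unfolding g_def F_def using W_g_props(2) dd(1) less_imp_le that by blast
  have gB: "g n s \<le> Kmax" if "s \<in> {0..1}" for n s
    unfolding g_def F_def using W_g_props(3) dd(1) less_imp_le that by blast
  have Flip: "\<bar>F n x - F n y\<bar> \<le> L * \<bar>x - y\<bar>" if "x \<in> {0..1}" "y \<in> {0..1}" for n x y
    unfolding L_def
    by (rule lip[OF gc gpos gB Ffix _ _ that]) (use lam aa(1)[of n] a0 in auto)
  have F1: "F n 1 = 0" for n unfolding F_def using aa(2) by simp
  have F0: "F n 0 = 0" for n using Ffix[of 0 n] by simp
  have Fb: "norm (F n x) \<le> L" if "x \<in> {0..1}" for n x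
  proof -
    have "\<bar>F n x - F n 0\<bar> \<le> L * \<bar>x - 0\<bar>" using Flip[OF that, of 0] by simp
    also have "\<dots> \<le> L" using that L0 by (simp add: mult_left_le)
    finally show ?thesis using F0 by simp
  qed
  obtain U r where U: "continuous_on {0..1} U" and r: "strict_mono (r :: nat \<Rightarrow> nat)"
    and unif: "\<And>e. 0 < e \<Longrightarrow> \<exists>N. \<forall>n x. n \<ge> N \<and> x \<in> {0..1} \<longrightarrow> norm (F (r n) x - U x) < e"
  proof (rule Arzela_Ascoli[of "{0..1::real}" F L])
    show "compact {0..1::real}" by simp
    show "\<And>n x. x \<in> {0..1} \<Longrightarrow> norm (F n x) \<le> L" by (rule Fb)
    fix x e :: real assume x: "x \<in> {0..1}" and e: "0 < e"
    show "\<exists>d>0. \<forall>n y. y \<in> {0..1} \<and> norm (x - y) < d \<longrightarrow> norm (F n x - F n y) < e"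
    proof (intro exI[of _ "e / (L + 1)"] conjI allI impI)
      show "0 < e / (L + 1)" using e L0 by simp
      fix n y assume y: "y \<in> {0..1} \<and> norm (x - y) < e / (L + 1)"
      have "\<bar>F n x - F n y\<bar> \<le> L * \<bar>x - y\<bar>" using Flip x y by blast
      also have "\<dots> \<le> L * (e / (L + 1))" using y L0 by (intro mult_left_mono) auto
      also have "\<dots> < e" using e L0 by (simp add: field_simps)
      finally show "norm (F n x - F n y) < e" by simp
    qed
  qed blast
  have "seq_compact {a0..R}" by (rule compact_imp_seq_compact) simp
  moreover have "\<forall>n. (aa \<circ> r) n \<in> {a0..R}" using aa(1) by simp
  ultimately obtain A r2 where A: "A \<in> {a0..R}" and r2: "strict_mono (r2 :: nat \<Rightarrow> nat)"
    and alim: "((aa \<circ> r) \<circ> r2) \<longlonglongrightarrow> A"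
    unfolding seq_compact_def by metis
  have U1: "U 1 = 0"
  proof (rule ccontr)
    assume "U 1 \<noteq> 0"
    then obtain N where "\<forall>n x. n \<ge> N \<and> x \<in> {0..1} \<longrightarrow> norm (F (r n) x - U x) < \<bar>U 1\<bar>"
      using unif[of "\<bar>U 1\<bar>"] by auto
    then have "\<bar>F (r N) 1 - U 1\<bar> < \<bar>U 1\<bar>" by auto
    then show False using F1 by simp
  qed
  have eqn: "U t = A*t - lam * Iop (\<lambda>s. K s (U s)) t" if t: "t \<in> {0..1}" for t
  proof -
    define G where "G = (\<lambda>s. K s (U s))"
    have Gc: "continuous_on {0..1} G" unfolding G_def by (rule Kcomp[OF U])
    have small_all: "\<bar>U t - (A*t - lam * Iop G t)\<bar> < e" if e: "0 < e" for e
    proof -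
      have e3: "0 < e / (3 * lam)" using e lam by simp
      obtain \<delta>K where \<delta>K: "\<delta>K > 0" "\<forall>t\<in>{0..1}. \<forall>x y. \<bar>x - y\<bar> < \<delta>K \<longrightarrow> \<bar>K t x - K t y\<bar> < e / (3 * lam)"
        using Kunif[OF e3] by auto
      have m0: "0 < min (\<delta>K/2) (e/3)" using \<delta>K e by simp
      obtain N1 where N1: "\<forall>n x. n \<ge> N1 \<and> x \<in> {0..1} \<longrightarrow> norm (F (r n) x - U x) < min (\<delta>K/2) (e/3)"
        using unif[OF m0] by blast
      have e3': "0 < e / 3" using e by simp
      obtain N2 where N2: "\<forall>n\<ge>N2. norm (((aa \<circ> r) \<circ> r2) n - A) < e / 3"
        using alim e3' unfolding LIMSEQ_iff by blast
      obtain N3 :: nat where N3: "2 * L / \<delta>K < real N3" using reals_Archimedean2 by blast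
      define n where "n = max N1 (max N2 N3)"
      define j where "j = r2 n"
      define m where "m = r j"
      have jn: "n \<le> j" unfolding j_def using seq_suble[OF r2] .
      have mj: "j \<le> m" unfolding m_def using seq_suble[OF r] .
      have Fm: "\<bar>F m x - U x\<bar> < min (\<delta>K/2) (e/3)" if "x \<in> {0..1}" for x
        using N1 that jn unfolding m_def n_def by fastforce
      have am: "\<bar>aa m - A\<bar> < e/3" using N2 unfolding m_def j_def n_def by fastforce
      have "2 * L / \<delta>K < real m + 4" using N3 jn mj unfolding n_def by linarith
      hence "2 * L < \<delta>K * (real m + 4)" using \<delta>K by (simp add: divide_less_eq mult.commute)
      hence Ld: "L * dd m < \<delta>K / 2" unfolding dd_def by (simp add: field_simps)
      have gG: "\<bar>g m s - G s\<bar> \<le> e / (3 * lam)" if s: "s \<in> {0..1}" for s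
      proof -
        define s' where "s' = max 0 (s - dd m)"
        have s': "s' \<in> {0..1}" "\<bar>s' - s\<bar> \<le> dd m" using s dd[of m] unfolding s'_def by auto
        have "\<bar>F m s' - F m s\<bar> \<le> L * \<bar>s' - s\<bar>" using Flip s' s by blast
        also have "\<dots> \<le> L * dd m" using s' L0 by (intro mult_left_mono) auto
        finally have "\<bar>F m s' - U s\<bar> < \<delta>K" using Fm[OF s] Ld by linarith
        then have "\<bar>K s (F m s') - K s (U s)\<bar> < e / (3 * lam)" using \<delta>K(2) s by blast
        then show ?thesis unfolding g_def G_def s'_def by simp
      qed
      have "\<bar>Iop (\<lambda>s. g m s - G s) t\<bar> \<le> e / (3 * lam) * t * t"
        by (rule I_bound[OF _ t]) (use gc Gc gG in \<open>auto intro: continuous_intros\<close>)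
      also have "\<dots> \<le> e / (3 * lam)"
      proof -
        have tt: "t * t \<le> 1" using t by (simp add: mult_le_one)
        show ?thesis using mult_left_le[OF tt, of "e / (3 * lam)"] e3 by (simp add: mult.assoc)
      qed
      finally have IG: "\<bar>Iop (g m) t - Iop G t\<bar> \<le> e / (3 * lam)" using I_diff[OF gc Gc t] by simp
      have "lam * \<bar>Iop (g m) t - Iop G t\<bar> \<le> lam * (e / (3 * lam))"
        using mult_left_mono[OF IG less_imp_le[OF lam]] .
      also have "lam * (e / (3 * lam)) = e / 3" using lam by simp
      finally have l2: "\<bar>lam * Iop (g m) t - lam * Iop G t\<bar> \<le> e / 3"
        using lam by (simp add: abs_mult right_diff_distrib[symmetric])
      have "\<bar>aa m * t - A * t\<bar> = \<bar>aa m - A\<bar> * t" using t by (simp add: abs_mult left_diff_distrib[symmetric])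
      also have "\<dots> \<le> \<bar>aa m - A\<bar>" using t by (simp add: mult_left_le)
      finally have l1: "\<bar>aa m * t - A * t\<bar> < e/3" using am by simp
      have l0: "\<bar>F m t - U t\<bar> < e/3" using Fm[OF t] by simp
      show ?thesis using Ffix[OF t, of m] l0 l1 l2 unfolding abs_less_iff abs_le_iff by linarith
    qed
    have "\<bar>U t - (A*t - lam * Iop G t)\<bar> = 0"
    proof (rule ccontr)
      assume "\<bar>U t - (A*t - lam * Iop G t)\<bar> \<noteq> 0"
      then have "0 < \<bar>U t - (A*t - lam * Iop G t)\<bar>" by simp
      from small_all[OF this] show False by simp
    qed
    then show ?thesis unfolding G_def by simp
  qed
  show ?thesis using A a0 U U1 eqn by (intro exI[of _ A] exI[of _ U]) auto
qed

end



definition rho :: "nat \<Rightarrow> real \<Rightarrow> real \<Rightarrow> real \<Rightarrow> real" where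
  "rho N r1 r2 t = (if N = 2 then r2 * (r1 / r2) powr t
      else (let A = (r1 * r2) ^ (N - 2) / (r2 ^ (N - 2) - r1 ^ (N - 2));
                B = r2 ^ (N - 2) / (r2 ^ (N - 2) - r1 ^ (N - 2))
            in (A / (B - t)) powr (1 / (real N - 2))))"

lemma ffun_rho: "ffun N r1 r2 h t u = h (rho N r1 r2 t) u"
  by (simp add: ffun_def rho_def Let_def)

lemma pow_powr_inv:
  fixes x :: real
  assumes "0 < x" "1 \<le> m"
  shows "(x ^ m) powr (1 / real m) = x"
proof -
  have "(x ^ m) powr (1 / real m) = (x powr real m) powr (1 / real m)"
    using assms by (simp add: powr_realpow)
  also have "\<dots> = x powr (real m * (1 / real m))" by (simp add: powr_powr)
  also have "\<dots> = x" using assms by simp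
  finally show ?thesis .
qed

lemma rho_q_props:
  assumes r: "0 < r1" "r1 < r2" and N: "2 \<le> N"
  shows "continuous_on {0..1} (rho N r1 r2)"
    and "\<And>t. t \<in> {0..1} \<Longrightarrow> rho N r1 r2 t \<in> {r1..r2}"
    and "continuous_on {0..1} (qfun N r1 r2)"
    and "\<And>t. t \<in> {0..1} \<Longrightarrow> 0 < qfun N r1 r2 t"
proof -
  have r2: "0 < r2" using r by simp
  have "continuous_on {0..1} (rho N r1 r2) \<and> (\<forall>t\<in>{0..1}. rho N r1 r2 t \<in> {r1..r2}) \<and>
        continuous_on {0..1} (qfun N r1 r2) \<and> (\<forall>t\<in>{0..1}. 0 < qfun N r1 r2 t)"
  proof (cases "N = 2")
    case True
    have rho: "rho N r1 r2 = (\<lambda>t. r2 * (r1 / r2) powr t)" using True by (simp add: rho_def fun_eq_iff)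
    have q: "qfun N r1 r2 = (\<lambda>t. (r2 * (r1 / r2) powr t * ln (r2 / r1))\<^sup>2)"
      using True by (simp add: qfun_def fun_eq_iff)
    have c0: "0 < r1 / r2" "r1 / r2 \<le> 1" using r by auto
    have rng: "rho N r1 r2 t \<in> {r1..r2}" if t: "t \<in> {0..1}" for t
    proof -
      have "(r1 / r2) powr t \<le> 1" using c0 t by (intro powr_le1) auto
      moreover have "(r1 / r2) powr 1 \<le> (r1 / r2) powr t" using c0 t by (intro powr_mono') auto
      hence "r1 / r2 \<le> (r1 / r2) powr t" using c0 r by (simp add: abs_of_pos)
      ultimately have "r2 * (r1/r2) \<le> r2 * (r1 / r2) powr t" "r2 * (r1 / r2) powr t \<le> r2 * 1"
        using r2 by (intro mult_left_mono; simp)+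
      moreover have "r2 * (r1/r2) = r1" using r2 by simp
      ultimately show ?thesis unfolding rho by simp
    qed
    have ln0: "0 < ln (r2 / r1)" using r by simp
    show ?thesis unfolding rho q using rng[unfolded rho] c0 r2 ln0
      by (auto intro!: continuous_intros)
  next
    case False
    define m where "m = N - 2"
    have m1: "1 \<le> m" using N False unfolding m_def by simp
    have mr: "real N - 2 = real m" using N unfolding m_def by simp
    define D where "D = r2 ^ m - r1 ^ m"
    have D0: "0 < D" unfolding D_def using r m1 by (simp add: power_strict_mono)
    define A where "A = (r1 * r2) ^ m / D"
    define B where "B = r2 ^ m / D"
    have A0: "0 < A" unfolding A_def using D0 r by simp
    have Bt: "0 < B - t" if "t \<le> 1" for t
    proof -
      have "B - 1 = r1 ^ m / D" unfolding B_def D_def using D0 D_def by (simp add: field_simps)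
      moreover have "0 < r1 ^ m / D" using D0 r by simp
      ultimately show ?thesis using that by linarith
    qed
    have rho: "rho N r1 r2 = (\<lambda>t. (A / (B - t)) powr (1 / real m))"
      using False unfolding rho_def A_def B_def D_def m_def by (simp add: fun_eq_iff Let_def mr[unfolded m_def])
    have q: "qfun N r1 r2 = (\<lambda>t. (1 / (real m)\<^sup>2) * A powr (2 / real m) / (B - t) powr (2 * (real N - 1) / real m))"
      using False unfolding qfun_def A_def B_def D_def m_def by (simp add: fun_eq_iff Let_def mr[unfolded m_def])
    have rng: "rho N r1 r2 t \<in> {r1..r2}" if t: "t \<in> {0..1}" for t
    proof -
      define E where "E = r2 ^ m - t * D"
      have E1: "r1 ^ m \<le> E" unfolding E_def D_def using t D0 D_def
        by (smt (verit, ccfv_SIG) atLeastAtMost_iff mult_left_le_one_le)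
      have E2: "E \<le> r2 ^ m" unfolding E_def using t D0 by simp
      have E0: "0 < E" using E1 r by (smt (verit) zero_less_power)
      have eq: "A / (B - t) = (r1 * r2) ^ m / E"
        unfolding A_def B_def E_def using D0 E0 unfolding E_def by (simp add: field_simps)
      have "(r1 * r2) ^ m / r2 ^ m \<le> (r1 * r2) ^ m / E"
        using E0 E2 r by (intro divide_left_mono) auto
      hence lo: "r1 ^ m \<le> A / (B - t)" unfolding eq using r2 by (simp add: power_mult_distrib)
      have "(r1 * r2) ^ m / E \<le> (r1 * r2) ^ m / r1 ^ m"
        using E0 E1 r by (intro divide_left_mono) auto
      hence hi: "A / (B - t) \<le> r2 ^ m" unfolding eq using r by (simp add: power_mult_distrib)
      have "(r1 ^ m) powr (1 / real m) \<le> (A / (B - t)) powr (1 / real m)"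
        using lo r by (intro powr_mono2) auto
      moreover have "(A / (B - t)) powr (1 / real m) \<le> (r2 ^ m) powr (1 / real m)"
      proof -
        have "0 \<le> r1 ^ m" using r by simp
        hence "0 \<le> A / (B - t)" using lo by linarith
        then show ?thesis using hi by (intro powr_mono2) auto
      qed
      ultimately show ?thesis unfolding rho using pow_powr_inv[OF r(1) m1] pow_powr_inv[OF r2 m1] by simp
    qed
    have pos: "0 < A / (B - t)" if "t \<in> {0..1}" for t using A0 Bt[of t] that by simp
    have nz1: "\<forall>t\<in>{0..1}. B - t \<noteq> 0" using Bt by force
    have nz2: "\<forall>t\<in>{0..1}. A / (B - t) \<noteq> 0" using pos by force
    have nz3: "\<forall>t\<in>{0..1}. (B - t) powr (2 * (real N - 1) / real m) \<noteq> 0" using Bt by force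
    have nzA: "\<forall>t\<in>{0..1::real}. A \<noteq> 0" using A0 by force
    have c1: "continuous_on {0..1} (\<lambda>t. (A / (B - t)) powr (1 / real m))"
      by (intro continuous_intros nz1 nz2)
    have c2: "continuous_on {0..1} (\<lambda>t. (1 / (real m)\<^sup>2) * A powr (2 / real m) / (B - t) powr (2 * (real N - 1) / real m))"
      by (intro continuous_intros nz1 nz3 nzA)
    have qp: "0 < (1 / (real m)\<^sup>2) * A powr (2 / real m) / (B - t) powr (2 * (real N - 1) / real m)"
      if "t \<in> {0..1}" for t
      using A0 Bt[of t] that m1 by simp
    show ?thesis unfolding q using rng c1 c2 qp rho by auto
  qed
  then show "continuous_on {0..1} (rho N r1 r2)"
    and "\<And>t. t \<in> {0..1} \<Longrightarrow> rho N r1 r2 t \<in> {r1..r2}"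
    and "continuous_on {0..1} (qfun N r1 r2)"
    and "\<And>t. t \<in> {0..1} \<Longrightarrow> 0 < qfun N r1 r2 t" by auto
qed



theorem theorem1p2:
  fixes N :: nat and r1 r2 :: real and h :: "real \<Rightarrow> real \<Rightarrow> real"
  assumes "0 < r1" "r1 < r2" "N \<ge> 2"
    and "continuous_on ({r1..r2} \<times> {0..}) (\<lambda>(r, u). h r u)"
    and "\<And>r u. r \<in> {r1..r2} \<Longrightarrow> u \<ge> 0 \<Longrightarrow> h r u \<ge> 0"
    and "\<And>r. r \<in> {r1..r2} \<Longrightarrow> h r 0 = 0"
    and "\<forall>M. \<exists>\<delta>>0. \<forall>t\<in>{0<..<1}. \<forall>u. 0 < u \<and> u < \<delta> \<longrightarrow> ffun N r1 r2 h t u / u \<ge> M"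
  shows "\<forall>R>0. \<exists>lamR>0. \<forall>lam. 0 < lam \<and> lam < lamR \<longrightarrow>
           (\<exists>u. positive_solution N r1 r2 h lam u \<and> (\<forall>t\<in>{0..1}. u t \<le> R))"
proof (intro allI impI)
  fix R :: real assume R: "0 < R"
  note props = rho_q_props[OF assms(1,2,3)]
  define q where "q = qfun N r1 r2"
  define rh where "rh = rho N r1 r2"
  define S where "S = {0..1::real} \<times> {0..R}"
  define P where "P = (\<lambda>z::real\<times>real. q (fst z) * h (rh (fst z)) (snd z))"
  have qc: "continuous_on {0..1} q" and qpos: "\<And>t. t \<in> {0..1} \<Longrightarrow> 0 < q t"
    using props unfolding q_def by auto
  have rhc: "continuous_on {0..1} rh" and rhr: "\<And>t. t \<in> {0..1} \<Longrightarrow> rh t \<in> {r1..r2}"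
    using props unfolding rh_def by auto
  have Pc: "continuous_on S P"
  proof -
    have c1: "continuous_on S (\<lambda>z. q (fst z))"
      by (rule continuous_on_compose2[OF qc continuous_on_fst]) (auto simp: S_def)
    have c2: "continuous_on S (\<lambda>z. rh (fst z))"
      by (rule continuous_on_compose2[OF rhc continuous_on_fst]) (auto simp: S_def)
    have c3: "continuous_on S (\<lambda>z. (rh (fst z), snd z))"
      by (intro continuous_on_Pair c2 continuous_on_snd continuous_on_id)
    have "(\<lambda>z. (rh (fst z), snd z)) ` S \<subseteq> {r1..r2} \<times> {0..}" using rhr by (auto simp: S_def)
    from continuous_on_compose2[OF assms(4) c3 this]
    have c4: "continuous_on S (\<lambda>z. h (rh (fst z)) (snd z))" by simp
    show ?thesis unfolding P_def by (intro continuous_intros c1 c4)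
  qed
  have Scomp: "compact S" unfolding S_def by (intro compact_Times compact_Icc)
  have Pnn: "0 \<le> P z" if "z \<in> S" for z
  proof -
    have z: "fst z \<in> {0..1}" "snd z \<in> {0..R}" using that unfolding S_def by (auto simp: mem_Times_iff)
    have "0 < q (fst z)" using qpos[OF z(1)] .
    moreover have "0 \<le> h (rh (fst z)) (snd z)" using assms(5)[OF rhr[OF z(1)]] z(2) by simp
    ultimately show ?thesis unfolding P_def by simp
  qed
  obtain Kmax where Kmax: "\<forall>z\<in>S. norm (P z) \<le> Kmax"
    using compact_imp_bounded[OF compact_continuous_image[OF Pc Scomp]] unfolding bounded_iff by auto
  have Kmax0: "0 \<le> Kmax" using Kmax[rule_format, of "(0,0)"] R unfolding S_def by auto
  define clamp where "clamp x = min (max x 0) R" for x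
  have clampS: "(t, clamp x) \<in> S" if "t \<in> {0..1}" for t x using that R unfolding S_def clamp_def by auto
  have clampL: "\<bar>clamp x - clamp y\<bar> \<le> \<bar>x - y\<bar>" for x y unfolding clamp_def by (auto simp: min_def max_def)
  define K where "K t x = P (t, clamp x)" for t x
  have Kq: "K t x = qfun N r1 r2 t * ffun N r1 r2 h t (clamp x)" for t x
    unfolding K_def P_def q_def rh_def by (simp add: ffun_rho)
  have Kcont: "continuous_on ({0..1} \<times> UNIV) (\<lambda>z. K (fst z) (snd z))"
  proof -
    have c: "continuous_on ({0..1::real} \<times> (UNIV::real set)) (\<lambda>z. (fst z, clamp (snd z)))"
      unfolding clamp_def by (intro continuous_intros)
    have "(\<lambda>z. (fst z, clamp (snd z))) ` ({0..1} \<times> UNIV) \<subseteq> S" using clampS by auto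
    from continuous_on_compose2[OF Pc c this] show ?thesis unfolding K_def by simp
  qed
  have Kunif: "\<exists>d>0. \<forall>t\<in>{0..1}. \<forall>x y. \<bar>x - y\<bar> < d \<longrightarrow> \<bar>K t x - K t y\<bar> < e" if e: "0 < e" for e
  proof -
    have "uniformly_continuous_on S P" by (rule compact_uniformly_continuous[OF Pc Scomp])
    then obtain d where d: "d > 0" "\<forall>x\<in>S. \<forall>x'\<in>S. dist x' x < d \<longrightarrow> dist (P x') (P x) < e"
      unfolding uniformly_continuous_on_def using e by blast
    show ?thesis
    proof (intro exI[of _ d] conjI ballI allI impI)
      fix t x y :: real assume t: "t \<in> {0..1}" and xy: "\<bar>x - y\<bar> < d"
      have "dist (t, clamp x) (t, clamp y) = \<bar>clamp x - clamp y\<bar>" by (simp add: dist_Pair_Pair dist_real_def)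
      also have "\<dots> < d" using clampL[of x y] xy by linarith
      finally have "dist (P (t, clamp x)) (P (t, clamp y)) < e" using d(2) clampS[OF t] by blast
      then show "\<bar>K t x - K t y\<bar> < e" unfolding K_def by (simp add: dist_real_def)
    qed (use d in auto)
  qed
  have Kbd: "0 \<le> K t x \<and> K t x \<le> Kmax" if "t \<in> {0..1}" for t x
    using Pnn[OF clampS[OF that]] Kmax clampS[OF that] unfolding K_def by fastforce
  have K0: "K t x = 0" if "t \<in> {0..1}" "x \<le> 0" for t x
  proof -
    have "clamp x = 0" using that R unfolding clamp_def by auto
    then show ?thesis unfolding K_def P_def using assms(6)[OF rhr[OF that(1)]] by simp
  qed
  obtain tq where tq: "tq \<in> {0..1}" "\<forall>s\<in>{0..1}. q tq \<le> q s"
    using continuous_attains_inf[OF compact_Icc _ qc] by fastforce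
  define qmin where "qmin = q tq"
  have qmin: "0 < qmin" "\<And>s. s \<in> {0..1} \<Longrightarrow> qmin \<le> q s" using tq qpos unfolding qmin_def by auto
  show "\<exists>lamR>0. \<forall>lam. 0 < lam \<and> lam < lamR \<longrightarrow>
           (\<exists>u. positive_solution N r1 r2 h lam u \<and> (\<forall>t\<in>{0..1}. u t \<le> R))"
  proof (intro exI[of _ "R / (Kmax + 1)"] conjI allI impI)
    show "0 < R / (Kmax + 1)" using R Kmax0 by simp
    fix lam :: real assume lam: "0 < lam \<and> lam < R / (Kmax + 1)"
    have lam0: "0 < lam" using lam by simp
    have "lam * (Kmax + 1) < R" using lam Kmax0 by (simp add: less_divide_eq)
    hence small: "lam * Kmax < R" using lam0 by (simp add: algebra_simps)
    interpret Kset K Kmax lam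
      by unfold_locales (use Kcont Kunif Kbd K0 lam0 in auto)
    define \<mu> where "\<mu> = 65 / lam"
    have mu: "64 < lam * \<mu>" unfolding \<mu>_def using lam0 by simp
    define M where "M = \<mu> / qmin"
    obtain \<delta>1 where \<delta>1: "\<delta>1 > 0" "\<forall>t\<in>{0<..<1}. \<forall>u. 0 < u \<and> u < \<delta>1 \<longrightarrow> ffun N r1 r2 h t u / u \<ge> M"
      using assms(7) by blast
    define dlt where "dlt = min \<delta>1 R"
    have dlt: "0 < dlt" unfolding dlt_def using \<delta>1 R by simp
    have Ks: "\<mu> * x \<le> K t x" if t: "t \<in> {1/2..3/4}" and x: "0 < x" "x < dlt" for t x
    proof -
      have cx: "clamp x = x" using x unfolding clamp_def dlt_def by auto
      have t01: "t \<in> {0<..<1}" "t \<in> {0..1}" using t by auto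
      have "M \<le> ffun N r1 r2 h t x / x" using \<delta>1(2) t01 x unfolding dlt_def by auto
      hence fM: "M * x \<le> ffun N r1 r2 h t x" using x by (simp add: le_divide_eq)
      have f0: "0 \<le> ffun N r1 r2 h t x" using assms(5)[OF rhr[OF t01(2)]] x
        unfolding rh_def by (simp add: ffun_rho)
      have "\<mu> * x = qmin * (M * x)" unfolding M_def using qmin by simp
      also have "\<dots> \<le> qmin * ffun N r1 r2 h t x" using fM qmin by (intro mult_left_mono) auto
      also have "\<dots> \<le> q t * ffun N r1 r2 h t x" using qmin(2)[OF t01(2)] f0 by (intro mult_right_mono) auto
      finally show ?thesis unfolding Kq cx q_def .
    qed
    obtain A U where A: "0 < A" "A \<le> R" and Uc: "continuous_on {0..1} U" and U1: "U 1 = 0"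
      and Uf: "\<forall>t\<in>{0..1}. U t = A*t - lam * Iop (\<lambda>s. K s (U s)) t"
      using exist[OF R small mu dlt Ks] by blast
    define G where "G = (\<lambda>s. K s (U s))"
    have Gc: "continuous_on {0..1} G" unfolding G_def by (rule Kcomp[OF Uc])
    have Gpos: "\<And>s. s \<in> {0..1} \<Longrightarrow> 0 \<le> G s" and GB: "\<And>s. s \<in> {0..1} \<Longrightarrow> G s \<le> Kmax"
      unfolding G_def using Kbd by auto
    have Uf': "\<And>t. t \<in> {0..1} \<Longrightarrow> U t = A*t - lam * Iop G t" using Uf unfolding G_def by auto
    define v where "v x = A - lam * integral {0..x} G" for x
    have D: "\<And>x. x\<in>{0..1} \<Longrightarrow> (U has_real_derivative v x) (at x within {0..1})"
      using conc_setup(1)[OF Gc Gpos Uf'] lam0 unfolding v_def by auto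
    have Mo: "\<And>x y. x \<in> {0..1} \<Longrightarrow> y \<in> {0..1} \<Longrightarrow> x \<le> y \<Longrightarrow> v y \<le> v x"
      using conc_setup(2)[OF Gc Gpos Uf'] lam0 unfolding v_def by auto
    have Upos: "0 < U t" if "0 < t" "t < 1" for t
      by (rule pos_interior[OF D Mo _ _ that]) (use U1 small_pos[OF Gc Gpos GB Uf' lam0 A(1)] in auto)
    have U0: "U 0 = 0" using Uf'[of 0] by simp
    have Ule: "U t \<le> R" if t: "t \<in> {0..1}" for t
    proof -
      have "0 \<le> Iop G t" using I_nonneg[OF Gc t] Gpos by auto
      hence "U t \<le> A * t" using Uf'[OF t] lam0 by (simp add: mult_nonneg_nonneg)
      also have "\<dots> \<le> A * 1" using t A by (intro mult_left_mono) auto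
      finally show ?thesis using A by simp
    qed
    have Uge: "0 \<le> U t" if t: "t \<in> {0..1}" for t
      using Upos[of t] t U0 U1 by (cases "t = 0"; cases "t = 1") auto
    have Geq: "G t = qfun N r1 r2 t * ffun N r1 r2 h t (U t)" if t: "t \<in> {0..1}" for t
    proof -
      have "clamp (U t) = U t" using Ule[OF t] Uge[OF t] unfolding clamp_def by auto
      then show ?thesis unfolding G_def Kq by simp
    qed
    have ps: "positive_solution N r1 r2 h lam U"
      unfolding positive_solution_def
    proof (intro conjI)
      show "continuous_on {0..1} U" by (rule Uc)
      show "U 0 = 0" by (rule U0)
      show "U 1 = 0" by (rule U1)
      show "\<forall>t\<in>{0<..<1}. 0 < U t" using Upos by auto
      show "\<exists>u' u''. (\<forall>t\<in>{0<..<1}. (U has_real_derivative u' t) (at t)) \<and>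
               (\<forall>t\<in>{0<..<1}. (u' has_real_derivative u'' t) (at t)) \<and>
               continuous_on {0<..<1} u'' \<and>
               (\<forall>t\<in>{0<..<1}. u'' t + lam * qfun N r1 r2 t * ffun N r1 r2 h t (U t) = 0)"
      proof -
        have w: "at t within {0..1} = at t" if t: "t \<in> {0<..<1}" for t :: real
          using t at_within_Icc_at[of 0 t 1] by auto
        have d1: "\<forall>t\<in>{0<..<1}. (U has_real_derivative v t) (at t)"
        proof
          fix t :: real assume t: "t \<in> {0<..<1}"
          have t1: "t \<in> {0..1}" using t by auto
          show "(U has_real_derivative v t) (at t)" using D[OF t1] unfolding w[OF t] .
        qed
        have d2: "\<forall>t\<in>{0<..<1}. (v has_real_derivative (\<lambda>t. - lam * G t) t) (at t)"
        proof
          fix t :: real assume t: "t \<in> {0<..<1}"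
          have t1: "t \<in> {0..1}" using t by auto
          have "((\<lambda>x. A - lam * integral {0..x} G) has_real_derivative (0 - lam * G t)) (at t within {0..1})"
            by (intro DERIV_diff DERIV_const DERIV_cmult integral_has_real_derivative[OF Gc t1])
          then show "(v has_real_derivative (\<lambda>t. - lam * G t) t) (at t)" unfolding w[OF t] v_def[abs_def] by simp
        qed
        have d3: "continuous_on {0<..<1} (\<lambda>t. - lam * G t)"
          by (intro continuous_intros continuous_on_subset[OF Gc]) auto
        have d4: "\<forall>t\<in>{0<..<1}. (\<lambda>t. - lam * G t) t + lam * qfun N r1 r2 t * ffun N r1 r2 h t (U t) = 0"
        proof
          fix t :: real assume t: "t \<in> {0<..<1}"
          have t1: "t \<in> {0..1}" using t by auto
          show "(\<lambda>t. - lam * G t) t + lam * qfun N r1 r2 t * ffun N r1 r2 h t (U t) = 0"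
            using Geq[OF t1] by simp
        qed
        show ?thesis
          by (rule exI[of _ v], rule exI[of _ "\<lambda>t. - lam * G t"]) (use d1 d2 d3 d4 in simp)
      qed
    qed
    show "\<exists>u. positive_solution N r1 r2 h lam u \<and> (\<forall>t\<in>{0..1}. u t \<le> R)"
      using ps Ule by blast
  qed
qed

end
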